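(* Let $G$ be a profinite group and assume that $G=H\ltimes N$ is the semidirect product of two closed subgroups $H$ and $N$ (with $N$ normal). If $H$ is a profinite-$C$ group and every open subgroup of $N$ has a $G$-invariant permutable complement in $N$, then $G$ is a profinite-$C$ group.
   Context: A permutable complement of a subgroup $H$ of a group $G$ is a subgroup $K$ with $G=HK$ and $H\cap K=1$. A profinite group $G$ is a profinite-$C$ group if every closed subgroup of $G$ has a closed permutable complement in $G$. *)

theory Defs
  imports "HOL-Analysis.Analysis" "HOL-Algebra.Coset"
begin

definition topological_group :: "('a, 'b) monoid_scheme \<Rightarrow> 'a topology \<Rightarrow> bool" where
  "topological_group G T \<longleftrightarrow> group G \<and> topspace T = carrier G \<and>
     continuous_map (prod_topology T T) T (\<lambda>(x, y). x \<otimes>\<^bsub>G\<^esub> y) \<and>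
     continuous_map T T (\<lambda>x. inv\<^bsub>G\<^esub> x)"

definition profinite_group :: "('a, 'b) monoid_scheme \<Rightarrow> 'a topology \<Rightarrow> bool" where
  "profinite_group G T \<longleftrightarrow> topological_group G T \<and> compact_space T \<and> Hausdorff_space T \<and>
     (\<forall>x \<in> topspace T. connected_component_of_set T x = {x})"

definition permutable_complement :: "('a, 'b) monoid_scheme \<Rightarrow> 'a set \<Rightarrow> 'a set \<Rightarrow> bool" where
  "permutable_complement G H K \<longleftrightarrow> subgroup K G \<and> H <#>\<^bsub>G\<^esub> K = carrier G \<and> H \<inter> K = {\<one>\<^bsub>G\<^esub>}"

definition profinite_C :: "('a, 'b) monoid_scheme \<Rightarrow> 'a topology \<Rightarrow> bool" where
  "profinite_C G T \<longleftrightarrow> profinite_group G T \<and>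
     (\<forall>H. subgroup H G \<and> closedin T H \<longrightarrow>
        (\<exists>K. closedin T K \<and> permutable_complement G H K))"

end

theory Submission
  imports Defs
begin

lemma setmult_iff: "x \<in> A <#>\<^bsub>G\<^esub> B \<longleftrightarrow> (\<exists>a\<in>A. \<exists>b\<in>B. x = a \<otimes>\<^bsub>G\<^esub> b)"
  by (auto simp: set_mult_def)

lemma setmult_upd: "A <#>\<^bsub>G\<lparr>carrier := N\<rparr>\<^esub> B = A <#>\<^bsub>G\<^esub> B"
  by (simp add: set_mult_def)

lemma (in group) grp_cancel1 [simp]: "x \<in> carrier G \<Longrightarrow> y \<in> carrier G \<Longrightarrow> inv x \<otimes> (x \<otimes> y) = y"
  by (simp add: m_assoc[symmetric])

lemma (in group) grp_cancel2 [simp]: "x \<in> carrier G \<Longrightarrow> y \<in> carrier G \<Longrightarrow> x \<otimes> (inv x \<otimes> y) = y"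
  by (simp add: m_assoc[symmetric])

locale tgrp = group G for G (structure) +
  fixes T :: "'a topology"
  assumes topsp: "topspace T = carrier G"
    and mcont: "continuous_map (prod_topology T T) T (\<lambda>(x, y). x \<otimes> y)"
    and icont: "continuous_map T T (\<lambda>x. inv x)"
begin

lemma cont_mult:
  assumes "continuous_map Z T f" "continuous_map Z T g"
  shows "continuous_map Z T (\<lambda>z. f z \<otimes> g z)"
proof -
  have "continuous_map Z (prod_topology T T) (\<lambda>z. (f z, g z))"
    using assms by (simp add: continuous_map_paired)
  from continuous_map_compose[OF this mcont] show ?thesis by (simp add: o_def)
qed

lemma cont_inv:
  assumes "continuous_map Z T f"
  shows "continuous_map Z T (\<lambda>z. inv (f z))"
  using continuous_map_compose[OF assms icont] by (simp add: o_def)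

lemma cont_const: "c \<in> carrier G \<Longrightarrow> continuous_map Z T (\<lambda>z. c)"
  by (simp add: topsp)

lemma cont_id: "continuous_map T T (\<lambda>x. x)"
  using continuous_map_id[of T] by (simp add: id_def)

lemma open_ltrans:
  assumes "openin T A" "g \<in> carrier G"
  shows "openin T (g <# A)"
proof -
  have A: "A \<subseteq> carrier G" using openin_subset[OF assms(1)] topsp by simp
  have eq: "g <# A = {x \<in> topspace T. inv g \<otimes> x \<in> A}"
    using A assms(2) by (force simp: l_coset_def topsp m_assoc[symmetric])
  have "continuous_map T T (\<lambda>x. inv g \<otimes> x)"
    by (intro cont_mult cont_const cont_id) (use assms in auto)
  from openin_continuous_map_preimage[OF this assms(1)] show ?thesis by (simp add: eq)
qed

lemma open_rtrans:
  assumes "openin T A" "g \<in> carrier G"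
  shows "openin T (A #> g)"
proof -
  have A: "A \<subseteq> carrier G" using openin_subset[OF assms(1)] topsp by simp
  have eq: "A #> g = {x \<in> topspace T. x \<otimes> inv g \<in> A}"
    using A assms(2) by (force simp: r_coset_def topsp m_assoc)
  have "continuous_map T T (\<lambda>x. x \<otimes> inv g)"
    by (intro cont_mult cont_const cont_id) (use assms in auto)
  from openin_continuous_map_preimage[OF this assms(1)] show ?thesis by (simp add: eq)
qed

lemma lcoset_self:
  assumes "subgroup W G" "x \<in> carrier G"
  shows "x \<in> x <# W"
proof -
  have "x \<otimes> \<one> \<in> x <# W" using subgroup.one_closed[OF assms(1)] unfolding l_coset_def by blast
  then show ?thesis using assms(2) by simp
qed

lemma open_subgroup_closed:
  assumes "subgroup W G" "openin T W"
  shows "closedin T W"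
proof -
  have eq: "topspace T - W = (\<Union>g\<in>carrier G - W. g <# W)"
  proof
    show "topspace T - W \<subseteq> (\<Union>g\<in>carrier G - W. g <# W)"
    proof
      fix x assume "x \<in> topspace T - W"
      then have "x \<in> x <# W" "x \<in> carrier G - W"
        using assms(1) lcoset_self by (auto simp: topsp)
      then show "x \<in> (\<Union>g\<in>carrier G - W. g <# W)" by blast
    qed
    show "(\<Union>g\<in>carrier G - W. g <# W) \<subseteq> topspace T - W"
    proof
      fix x assume "x \<in> (\<Union>g\<in>carrier G - W. g <# W)"
      then obtain g where g: "g \<in> carrier G" "g \<notin> W" and x: "x \<in> g <# W" by blast
      then obtain w where w: "w \<in> W" "x = g \<otimes> w" unfolding l_coset_def by blast
      have wc: "w \<in> carrier G" using subgroup.mem_carrier[OF assms(1) w(1)] .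
      show "x \<in> topspace T - W"
      proof
        show "x \<in> topspace T" using w wc g by (simp add: topsp)
        show "x \<notin> W"
        proof
          assume "x \<in> W"
          then have "x \<otimes> inv w \<in> W" using w assms(1) by (simp add: subgroup.m_closed subgroup.m_inv_closed)
          moreover have "x \<otimes> inv w = g" using w wc g by (simp add: m_assoc)
          ultimately show False using g by simp
        qed
      qed
    qed
  qed
  have "openin T (topspace T - W)"
    unfolding eq by (intro openin_Union) (use assms open_ltrans in auto)
  then show ?thesis
    using assms(1) subgroup.subset[OF assms(1)] by (simp add: closedin_def topsp)
qed

lemma open_subgroup_super:
  assumes "subgroup S G" "subgroup W G" "openin T W" "W \<subseteq> S"
  shows "openin T S"
proof (subst openin_subopen, intro ballI)
  fix s assume s: "s \<in> S"
  have sc: "s \<in> carrier G" using subgroup.mem_carrier[OF assms(1) s] .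
  have "s \<in> s <# W" using assms(2) sc lcoset_self by blast
  moreover have "s <# W \<subseteq> S" using assms s by (auto simp: l_coset_def intro: subgroup.m_closed)
  ultimately show "\<exists>T'. openin T T' \<and> s \<in> T' \<and> T' \<subseteq> S" using open_ltrans[OF assms(3) sc] by blast
qed

end

locale ctgrp = tgrp +
  assumes cpt: "compact_space T" and hd: "Hausdorff_space T"
begin

lemma closed_setmult:
  assumes "closedin T A" "closedin T B"
  shows "closedin T (A <#> B)"
proof -
  have eq: "A <#> B = (\<lambda>(x, y). x \<otimes> y) ` (A \<times> B)"
    by (auto simp: set_mult_def)
  have "compactin (prod_topology T T) (A \<times> B)"
    using assms cpt by (simp add: compactin_Times closedin_compact_space)
  from image_compactin[OF this mcont] have "compactin T (A <#> B)" by (simp add: eq)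
  then show ?thesis using hd compactin_imp_closedin by blast
qed

lemma closed_rcoset:
  assumes "closedin T A" "n \<in> carrier G"
  shows "closedin T (A #> n)"
proof -
  have "closedin T {n}" using hd assms(2) topsp
    by (metis Hausdorff_imp_t1_space closedin_t1_singleton)
  from closed_setmult[OF assms(1) this] show ?thesis by (simp add: r_coset_eq_set_mult)
qed

end

context ctgrp begin

lemma clopen_sep:
  assumes td: "\<forall>x\<in>topspace T. connected_component_of_set T x = {x}"
    and a: "a \<in> carrier G" "a \<noteq> \<one>"
  shows "\<exists>C. closedin T C \<and> openin T C \<and> \<one> \<in> C \<and> a \<notin> C"
proof -
  have q: "quasi_component_of T \<one> = connected_component_of T \<one>"
    by (rule quasi_eq_connected_component_of) (simp add: cpt hd)
  have "connected_component_of_set T \<one> = {\<one>}" using td topsp by simp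
  then have "\<not> connected_component_of T \<one> a" using a by auto
  then have "\<not> quasi_component_of T \<one> a" using q by simp
  then obtain C where C: "closedin T C" "openin T C" "\<not> (\<one> \<in> C \<longleftrightarrow> a \<in> C)"
    unfolding quasi_component_of_def using a topsp by auto
  show ?thesis
  proof (cases "\<one> \<in> C")
    case True then show ?thesis using C by blast
  next
    case False
    have "closedin T (topspace T - C)" "openin T (topspace T - C)"
      using C by auto
    moreover have "\<one> \<in> topspace T - C" "a \<notin> topspace T - C" using False C topsp by auto
    ultimately show ?thesis by blast
  qed
qed

definition rstab :: "'a set \<Rightarrow> 'a \<Rightarrow> bool" where
  "rstab C y \<longleftrightarrow> (\<forall>c\<in>C. c \<otimes> y \<in> C)"

lemma open_normal_avoid:
  assumes td: "\<forall>x\<in>topspace T. connected_component_of_set T x = {x}"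
    and a: "a \<in> carrier G" "a \<noteq> \<one>"
  shows "\<exists>W. subgroup W G \<and> (\<forall>g\<in>carrier G. \<forall>w\<in>W. g \<otimes> w \<otimes> inv g \<in> W) \<and> openin T W \<and> a \<notin> W"
proof -
  obtain C where C: "closedin T C" "openin T C" "\<one> \<in> C" "a \<notin> C"
    using clopen_sep[OF assms] by blast
  have Cc: "C \<subseteq> carrier G" using closedin_subset[OF C(1)] topsp by simp
  define P where "P = prod_topology T (prod_topology T T)"
  define f where "f = (\<lambda>p::'a \<times> 'a \<times> 'a. fst (snd p) \<otimes> (snd (snd p) \<otimes> fst p \<otimes> inv (snd (snd p))))"
  have c1: "continuous_map P T (\<lambda>p. fst p)" unfolding P_def by (rule continuous_map_fst)
  have csnd: "continuous_map P (prod_topology T T) snd" unfolding P_def by (rule continuous_map_snd)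
  have c2: "continuous_map P T (\<lambda>p. fst (snd p))"
    using continuous_map_fst_of[OF csnd] by (simp add: o_def)
  have c3: "continuous_map P T (\<lambda>p. snd (snd p))"
    using continuous_map_snd_of[OF csnd] by (simp add: o_def)
  have fc: "continuous_map P T f"
    unfolding f_def by (intro cont_mult cont_inv c1 c2 c3)
  define W0 where "W0 = {p \<in> topspace P. f p \<in> C}"
  have W0o: "openin P W0" unfolding W0_def by (rule openin_continuous_map_preimage[OF fc C(2)])
  have cpC: "compactin (prod_topology T T) (C \<times> carrier G)"
  proof -
    have "compactin T C" using C(1) cpt closedin_compact_space by blast
    moreover have "compactin T (carrier G)" using cpt topsp compact_space_def by metis
    ultimately show ?thesis by (simp add: compactin_Times)
  qed
  have sub: "{\<one>} \<times> (C \<times> carrier G) \<subseteq> W0"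
  proof clarify
    fix c x assume "c \<in> C" "x \<in> carrier G"
    moreover then have "c \<in> carrier G" using Cc by blast
    ultimately show "(\<one>, c, x) \<in> W0" unfolding W0_def f_def P_def by (simp add: topsp)
  qed
  obtain U V where UV: "openin T U" "openin (prod_topology T T) V" "\<one> \<in> U" "C \<times> carrier G \<subseteq> V" "U \<times> V \<subseteq> W0"
    using tube_lemma_right[OF W0o[unfolded P_def] cpC _ sub[unfolded P_def]] topsp by auto
  have tube: "c \<otimes> (x \<otimes> v \<otimes> inv x) \<in> C" if "v \<in> U" "c \<in> C" "x \<in> carrier G" for v c x
  proof -
    have "(v, c, x) \<in> W0" using UV that by blast
    then show ?thesis unfolding W0_def f_def by simp
  qed
  have Uc: "U \<subseteq> carrier G" using openin_subset[OF UV(1)] topsp by simp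
  define V' where "V' = U \<inter> {v \<in> topspace T. inv v \<in> U}"
  have V'o: "openin T V'" unfolding V'_def
    by (intro openin_Int UV(1) openin_continuous_map_preimage[OF icont UV(1)])
  have oneV': "\<one> \<in> V'" unfolding V'_def using UV(3) topsp by simp
  define S where "S = {y \<in> carrier G. rstab C y \<and> rstab C (inv y)}"
  have S_mult: "y \<otimes> z \<in> S" if "y \<in> S" "z \<in> S" for y z
  proof -
    have yz: "y \<in> carrier G" "z \<in> carrier G" "rstab C y" "rstab C z" "rstab C (inv y)" "rstab C (inv z)"
      using that unfolding S_def by auto
    have "rstab C (y \<otimes> z)" unfolding rstab_def
    proof
      fix c assume "c \<in> C"
      then have "c \<otimes> y \<otimes> z \<in> C" using yz unfolding rstab_def by blast
      then show "c \<otimes> (y \<otimes> z) \<in> C" using yz \<open>c \<in> C\<close> Cc by (simp add: m_assoc subset_iff)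
    qed
    moreover have "rstab C (inv (y \<otimes> z))" unfolding rstab_def
    proof
      fix c assume "c \<in> C"
      then have "c \<otimes> inv z \<otimes> inv y \<in> C" using yz unfolding rstab_def by blast
      then show "c \<otimes> inv (y \<otimes> z) \<in> C" using yz \<open>c \<in> C\<close> Cc by (simp add: m_assoc subset_iff inv_mult_group)
    qed
    ultimately show ?thesis using yz unfolding S_def by simp
  qed
  have S_inv: "inv y \<in> S" if "y \<in> S" for y
    using that unfolding S_def by auto
  have S_one: "\<one> \<in> S" unfolding S_def rstab_def using Cc by (auto simp: subset_iff)
  have conj_c: "x \<otimes> g \<otimes> inv x \<in> carrier G" if "x \<in> carrier G" "g \<in> carrier G" for x g
    using that by simp
  define Wn where "Wn = {g \<in> carrier G. \<forall>x\<in>carrier G. x \<otimes> g \<otimes> inv x \<in> S}"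
  have Wn_sub: "subgroup Wn G"
  proof (rule subgroupI)
    show "Wn \<subseteq> carrier G" unfolding Wn_def by blast
    show "Wn \<noteq> {}" using S_one unfolding Wn_def by (auto intro!: exI[of _ \<one>])
    show "inv g \<in> Wn" if "g \<in> Wn" for g
    proof -
      have g: "g \<in> carrier G" using that unfolding Wn_def by blast
      have "x \<otimes> inv g \<otimes> inv x \<in> S" if "x \<in> carrier G" for x
      proof -
        have "x \<otimes> g \<otimes> inv x \<in> S" using \<open>g \<in> Wn\<close> that unfolding Wn_def by blast
        from S_inv[OF this] show ?thesis using g that by (simp add: inv_mult_group m_assoc)
      qed
      then show ?thesis using g unfolding Wn_def by simp
    qed
    show "g \<otimes> h \<in> Wn" if "g \<in> Wn" "h \<in> Wn" for g h
    proof -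
      have gh: "g \<in> carrier G" "h \<in> carrier G" using that unfolding Wn_def by auto
      have "x \<otimes> (g \<otimes> h) \<otimes> inv x \<in> S" if "x \<in> carrier G" for x
      proof -
        have "x \<otimes> g \<otimes> inv x \<in> S" "x \<otimes> h \<otimes> inv x \<in> S" using \<open>g \<in> Wn\<close> \<open>h \<in> Wn\<close> that unfolding Wn_def by auto
        from S_mult[OF this] have "x \<otimes> g \<otimes> inv x \<otimes> (x \<otimes> h \<otimes> inv x) \<in> S" .
        moreover have "x \<otimes> g \<otimes> inv x \<otimes> (x \<otimes> h \<otimes> inv x) = x \<otimes> (g \<otimes> h) \<otimes> inv x"
          using gh that by (simp add: m_assoc)
        ultimately show ?thesis by simp
      qed
      then show ?thesis using gh unfolding Wn_def by simp
    qed
  qed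
  have Wn_norm: "\<forall>g\<in>carrier G. \<forall>w\<in>Wn. g \<otimes> w \<otimes> inv g \<in> Wn"
  proof (intro ballI)
    fix g w assume g: "g \<in> carrier G" and w: "w \<in> Wn"
    have wc: "w \<in> carrier G" using w unfolding Wn_def by blast
    have "x \<otimes> (g \<otimes> w \<otimes> inv g) \<otimes> inv x \<in> S" if "x \<in> carrier G" for x
    proof -
      have "(x \<otimes> g) \<otimes> w \<otimes> inv (x \<otimes> g) \<in> S" using w that g unfolding Wn_def by simp
      moreover have "(x \<otimes> g) \<otimes> w \<otimes> inv (x \<otimes> g) = x \<otimes> (g \<otimes> w \<otimes> inv g) \<otimes> inv x"
        using g wc that by (simp add: m_assoc inv_mult_group)
      ultimately show ?thesis by simp
    qed
    then show "g \<otimes> w \<otimes> inv g \<in> Wn" using g wc unfolding Wn_def by simp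
  qed
  have a_notin: "a \<notin> Wn"
  proof
    assume "a \<in> Wn"
    then have "\<one> \<otimes> a \<otimes> inv \<one> \<in> S" unfolding Wn_def by blast
    then have "rstab C a" using a unfolding S_def by simp
    then have "\<one> \<otimes> a \<in> C" using C(3) unfolding rstab_def by blast
    then show False using a C(4) by simp
  qed
  have V'_sub: "V' \<subseteq> Wn"
  proof
    fix v assume v: "v \<in> V'"
    then have vU: "v \<in> U" "inv v \<in> U" and vc: "v \<in> carrier G" unfolding V'_def using topsp by auto
    have "x \<otimes> v \<otimes> inv x \<in> S" if x: "x \<in> carrier G" for x
    proof -
      have "rstab C (x \<otimes> v \<otimes> inv x)" unfolding rstab_def using tube[OF vU(1) _ x] by blast
      moreover have "rstab C (x \<otimes> inv v \<otimes> inv x)" unfolding rstab_def using tube[OF vU(2) _ x] by blast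
      moreover have "inv (x \<otimes> v \<otimes> inv x) = x \<otimes> inv v \<otimes> inv x" using x vc by (simp add: inv_mult_group m_assoc)
      ultimately show ?thesis unfolding S_def using x vc by simp
    qed
    then show "v \<in> Wn" using vc unfolding Wn_def by simp
  qed
  have Wn_open: "openin T Wn"
  proof (subst openin_subopen, intro ballI)
    fix g assume g: "g \<in> Wn"
    have gc: "g \<in> carrier G" using g unfolding Wn_def by blast
    have "g \<in> g <# V'"
    proof -
      have "g \<otimes> \<one> \<in> g <# V'" using oneV' unfolding l_coset_def by blast
      then show ?thesis using gc by simp
    qed
    moreover have "g <# V' \<subseteq> Wn"
    proof
      fix y assume "y \<in> g <# V'"
      then obtain v where "v \<in> V'" "y = g \<otimes> v" unfolding l_coset_def by blast
      then have "v \<in> Wn" "y = g \<otimes> v" using V'_sub by auto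
      then show "y \<in> Wn" using subgroup.m_closed[OF Wn_sub g] by simp
    qed
    ultimately show "\<exists>T'. openin T T' \<and> g \<in> T' \<and> T' \<subseteq> Wn" using open_ltrans[OF V'o gc] by blast
  qed
  show ?thesis by (rule exI[of _ Wn]) (intro conjI Wn_sub Wn_norm Wn_open a_notin)
qed

end

lemma Zorn_min:
  assumes ne: "F \<noteq> {}" and ch: "\<And>C. C \<noteq> {} \<Longrightarrow> subset.chain F C \<Longrightarrow> \<Inter>C \<in> F"
  shows "\<exists>M\<in>F. \<forall>X\<in>F. X \<subseteq> M \<longrightarrow> X = M"
proof -
  have "\<exists>M\<in>uminus ` F. \<forall>X\<in>uminus ` F. M \<subseteq> X \<longrightarrow> X = M"
  proof (rule subset_Zorn_nonempty)
    show "uminus ` F \<noteq> {}" using ne by simp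
    fix C' assume C': "C' \<noteq> {}" "subset.chain (uminus ` F) C'"
    define C where "C = uminus ` C'"
    have CF: "C \<subseteq> F" using C' unfolding C_def subset_chain_def by auto
    have Cch: "subset.chain F C"
      unfolding subset_chain_def C_def using C' CF unfolding subset_chain_def C_def by auto
    have "\<Inter>C \<in> F" using ch[OF _ Cch] C' unfolding C_def by simp
    moreover have "\<Union>C' = - \<Inter>C" unfolding C_def by auto
    ultimately show "\<Union>C' \<in> uminus ` F" by auto
  qed
  then obtain M' where M': "M' \<in> uminus ` F" "\<forall>X\<in>uminus ` F. M' \<subseteq> X \<longrightarrow> X = M'" by blast
  then obtain M where M: "M \<in> F" "M' = - M" by blast
  have "\<forall>X\<in>F. X \<subseteq> M \<longrightarrow> X = M"
  proof (intro ballI impI)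
    fix X assume "X \<in> F" "X \<subseteq> M"
    then have "- X = M'" using M' M by auto
    then show "X = M" using M by auto
  qed
  then show ?thesis using M by blast
qed

context group begin

definition invar :: "'a set \<Rightarrow> bool" where
  "invar B \<longleftrightarrow> (\<forall>g\<in>carrier G. \<forall>x\<in>B. g \<otimes> x \<otimes> inv g \<in> B)"

lemma invarD: "invar B \<Longrightarrow> g \<in> carrier G \<Longrightarrow> x \<in> B \<Longrightarrow> g \<otimes> x \<otimes> inv g \<in> B"
  unfolding invar_def by blast

lemma subgroup_setmult:
  assumes A: "subgroup A G" and B: "subgroup B G" and Bi: "invar B"
  shows "subgroup (A <#> B) G"
proof (rule subgroupI)
  have Ac: "\<And>a. a \<in> A \<Longrightarrow> a \<in> carrier G" using subgroup.mem_carrier[OF A] .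
  have Bc: "\<And>a. a \<in> B \<Longrightarrow> a \<in> carrier G" using subgroup.mem_carrier[OF B] .
  show "A <#> B \<subseteq> carrier G" using Ac Bc by (auto simp: set_mult_def)
  have "\<one> \<otimes> \<one> \<in> A <#> B" unfolding setmult_iff using subgroup.one_closed[OF A] subgroup.one_closed[OF B] by blast
  then show "A <#> B \<noteq> {}" by blast
  show "inv x \<in> A <#> B" if xin: "x \<in> A <#> B" for x
  proof -
    obtain a b where ab: "a \<in> A" "b \<in> B" "x = a \<otimes> b" using xin unfolding setmult_iff by blast
    have ac: "a \<in> carrier G" and bc: "b \<in> carrier G" using Ac Bc ab by auto
    have "a \<otimes> inv b \<otimes> inv a \<in> B" using invarD[OF Bi ac subgroup.m_inv_closed[OF B ab(2)]] .
    moreover have "inv a \<in> A" using subgroup.m_inv_closed[OF A ab(1)] .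
    moreover have "inv x = inv a \<otimes> (a \<otimes> inv b \<otimes> inv a)" using ac bc ab(3) by (simp add: inv_mult_group m_assoc)
    ultimately show ?thesis unfolding setmult_iff by blast
  qed
  show "x \<otimes> y \<in> A <#> B" if xyin: "x \<in> A <#> B" "y \<in> A <#> B" for x y
  proof -
    obtain a b where ab: "a \<in> A" "b \<in> B" "x = a \<otimes> b" using xyin(1) unfolding setmult_iff by blast
    obtain a2 b2 where ab2: "a2 \<in> A" "b2 \<in> B" "y = a2 \<otimes> b2" using xyin(2) unfolding setmult_iff by blast
    have c: "a \<in> carrier G" "b \<in> carrier G" "a2 \<in> carrier G" "b2 \<in> carrier G" using Ac Bc ab ab2 by auto
    have "inv a2 \<otimes> b \<otimes> inv (inv a2) \<in> B" using invarD[OF Bi inv_closed[OF c(3)] ab(2)] .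
    then have "inv a2 \<otimes> b \<otimes> a2 \<in> B" using c by simp
    then have "inv a2 \<otimes> b \<otimes> a2 \<otimes> b2 \<in> B" using subgroup.m_closed[OF B _ ab2(2)] c by simp
    moreover have "a \<otimes> a2 \<in> A" using subgroup.m_closed[OF A ab(1) ab2(1)] .
    moreover have "x \<otimes> y = (a \<otimes> a2) \<otimes> (inv a2 \<otimes> b \<otimes> a2 \<otimes> b2)" using c ab(3) ab2(3) by (simp add: m_assoc)
    ultimately show ?thesis unfolding setmult_iff by blast
  qed
qed

end

context ctgrp begin

lemma setmult_open:
  assumes "A \<subseteq> carrier G" "openin T W"
  shows "openin T (A <#> W)"
proof -
  have "A <#> W = (\<Union>u\<in>A. u <# W)" by (auto simp: set_mult_def l_coset_def)
  moreover have "openin T (\<Union>u\<in>A. u <# W)"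
    using assms by (intro openin_Union) (auto intro: open_ltrans)
  ultimately show ?thesis by simp
qed

lemma chain_inter_ok:
  assumes N: "subgroup N G" and U: "subgroup U G" "U \<subseteq> N" "closedin T U"
    and CF: "C \<noteq> {}" "subset.chain {M. closedin T M \<and> subgroup M G \<and> M \<subseteq> N \<and> invar M \<and> U <#> M = N} C"
  shows "\<Inter>C \<in> {M. closedin T M \<and> subgroup M G \<and> M \<subseteq> N \<and> invar M \<and> U <#> M = N}"
proof -
  define F where "F = {M. closedin T M \<and> subgroup M G \<and> M \<subseteq> N \<and> invar M \<and> U <#> M = N}"
  have CsF: "C \<subseteq> F" using CF(2) unfolding F_def subset_chain_def by blast
  have Ch: "\<forall>X\<in>C. \<forall>Y\<in>C. X \<subseteq> Y \<or> Y \<subseteq> X" using CF(2) unfolding subset_chain_def by blast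
  obtain M1 where M1: "M1 \<in> C" using CF(1) by blast
  have cl: "closedin T (\<Inter>C)" using CsF CF(1) unfolding F_def by (intro closedin_Inter) auto
  have sg: "subgroup (\<Inter>C) G" using CsF CF(1) unfolding F_def by (intro subgroups_Inter) auto
  have sN: "\<Inter>C \<subseteq> N" using CsF M1 unfolding F_def by blast
  have iv: "invar (\<Inter>C)" using CsF unfolding F_def invar_def by blast
  have Uc: "\<And>u. u \<in> U \<Longrightarrow> u \<in> carrier G" using subgroup.mem_carrier[OF U(1)] .
  have eq: "U <#> \<Inter>C = N"
  proof
    have "U <#> \<Inter>C \<subseteq> U <#> M1" using M1 by (intro mono_set_mult) auto
    also have "\<dots> = N" using M1 CsF unfolding F_def by blast
    finally show "U <#> \<Inter>C \<subseteq> N" .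
    show "N \<subseteq> U <#> \<Inter>C"
    proof
      fix n assume n: "n \<in> N"
      have nc: "n \<in> carrier G" using subgroup.mem_carrier[OF N n] .
      define \<U> where "\<U> = (\<lambda>M. M \<inter> (U #> n)) ` C"
      have "\<Inter>\<U> \<noteq> {}"
      proof (rule compact_space_fip[THEN iffD1, OF cpt, rule_format], intro conjI allI impI ballI)
        fix X assume "X \<in> \<U>"
        then obtain M where M: "M \<in> C" "X = M \<inter> (U #> n)" unfolding \<U>_def by blast
        show "closedin T X" unfolding M(2)
          using M(1) CsF closed_rcoset[OF U(3) nc] unfolding F_def by (intro closedin_Int) auto
      next
        fix \<F> assume \<F>: "finite \<F> \<and> \<F> \<subseteq> \<U>"
        then obtain C0 where C0: "C0 \<subseteq> C" "finite C0" "\<F> = (\<lambda>M. M \<inter> (U #> n)) ` C0"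
          unfolding \<U>_def using finite_subset_image by metis
        show "\<Inter>\<F> \<noteq> {}"
        proof (cases "C0 = {}")
          case True then show ?thesis using C0 by simp
        next
          case False
          have "subset.chain F C0" using C0(1) CsF Ch unfolding subset_chain_def by blast
          from Inter_in_chain[OF C0(2) False this] have M0: "\<Inter>C0 \<in> C0" .
          have "U <#> \<Inter>C0 = N" using M0 C0(1) CsF unfolding F_def by blast
          then have "n \<in> U <#> \<Inter>C0" using n by simp
          then obtain u m where um: "u \<in> U" "m \<in> \<Inter>C0" "n = u \<otimes> m" unfolding setmult_iff by blast
          have sM0: "subgroup (\<Inter>C0) G" using M0 C0(1) CsF unfolding F_def by blast
          have mc: "m \<in> carrier G" using subgroup.mem_carrier[OF sM0 um(2)] .
          have "m = inv u \<otimes> n" using um Uc mc by simp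
          then have "m \<in> U #> n" using subgroup.m_inv_closed[OF U(1) um(1)] unfolding r_coset_def by blast
          then have "m \<in> \<Inter>\<F>" using um(2) C0(3) by blast
          then show ?thesis by blast
        qed
      qed
      then obtain m where m: "m \<in> \<Inter>\<U>" by blast
      have mC: "m \<in> \<Inter>C" using m unfolding \<U>_def by blast
      have "m \<in> U #> n" using m M1 unfolding \<U>_def by blast
      then obtain u where u: "u \<in> U" "m = u \<otimes> n" unfolding r_coset_def by blast
      have "n = inv u \<otimes> m" using u Uc nc by simp
      then show "n \<in> U <#> \<Inter>C" using mC subgroup.m_inv_closed[OF U(1) u(1)] unfolding setmult_iff by blast
    qed
  qed
  show ?thesis using cl sg sN iv eq by blast
qed

end

context ctgrp begin

lemma invariant_complement:
  assumes td: "\<forall>x\<in>topspace T. connected_component_of_set T x = {x}"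
    and N: "subgroup N G" "closedin T N" "invar N"
    and hyp: "\<forall>V. subgroup V (G\<lparr>carrier := N\<rparr>) \<and> openin (subtopology T N) V \<longrightarrow>
           (\<exists>L. permutable_complement (G\<lparr>carrier := N\<rparr>) V L \<and>
                (\<forall>g \<in> carrier G. \<forall>x \<in> L. g \<otimes> x \<otimes> inv g \<in> L))"
    and U: "subgroup U G" "U \<subseteq> N" "closedin T U"
  shows "\<exists>M. closedin T M \<and> subgroup M G \<and> M \<subseteq> N \<and> invar M \<and> U <#> M = N \<and> U \<inter> M = {\<one>}"
proof -
  define F where "F = {M. closedin T M \<and> subgroup M G \<and> M \<subseteq> N \<and> invar M \<and> U <#> M = N}"
  have Uc: "\<And>u. u \<in> U \<Longrightarrow> u \<in> carrier G" using subgroup.mem_carrier[OF U(1)] .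
  have Nc: "\<And>u. u \<in> N \<Longrightarrow> u \<in> carrier G" using subgroup.mem_carrier[OF N(1)] .
  have UN: "U <#> N = N"
  proof
    show "U <#> N \<subseteq> N" using U(2) subgroup.m_closed[OF N(1)] by (auto simp: set_mult_def)
    show "N \<subseteq> U <#> N"
    proof
      fix n assume "n \<in> N"
      then have "n = \<one> \<otimes> n" using Nc by simp
      then show "n \<in> U <#> N" using \<open>n \<in> N\<close> subgroup.one_closed[OF U(1)] unfolding setmult_iff by blast
    qed
  qed
  have "N \<in> F" unfolding F_def using N UN by blast
  then have "F \<noteq> {}" by blast
  from Zorn_min[OF this] obtain M where M: "M \<in> F" and Mmin: "\<forall>X\<in>F. X \<subseteq> M \<longrightarrow> X = M"
    using chain_inter_ok[OF N(1) U] unfolding F_def by blast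
  have Mcl: "closedin T M" and Msg: "subgroup M G" and MN: "M \<subseteq> N" and Mi: "invar M" and UM: "U <#> M = N"
    using M unfolding F_def by auto
  have Mc: "\<And>u. u \<in> M \<Longrightarrow> u \<in> carrier G" using subgroup.mem_carrier[OF Msg] .
  have "U \<inter> M \<subseteq> {\<one>}"
  proof
    fix a assume aUM: "a \<in> U \<inter> M"
    show "a \<in> {\<one>}"
    proof (rule ccontr)
      assume "a \<notin> {\<one>}"
      then have a1: "a \<noteq> \<one>" by simp
      have ac: "a \<in> carrier G" using aUM Uc by blast
      obtain Wg where Wg: "subgroup Wg G" "\<forall>g\<in>carrier G. \<forall>w\<in>Wg. g \<otimes> w \<otimes> inv g \<in> Wg" "openin T Wg" "a \<notin> Wg"
        using open_normal_avoid[OF td ac a1] by blast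
      have Wgi: "invar Wg" using Wg(2) unfolding invar_def .
      have Wc: "\<And>u. u \<in> Wg \<Longrightarrow> u \<in> carrier G" using subgroup.mem_carrier[OF Wg(1)] .
      define U0 where "U0 = U \<inter> M"
      have U0sg: "subgroup U0 G" unfolding U0_def by (rule subgroups_Inter_pair[OF U(1) Msg])
      define V where "V = N \<inter> (U0 <#> Wg)"
      have Vsg: "subgroup V G" unfolding V_def
        by (rule subgroups_Inter_pair[OF N(1) subgroup_setmult[OF U0sg Wg(1) Wgi]])
      have VN: "V \<subseteq> N" unfolding V_def by blast
      have Vsg': "subgroup V (G\<lparr>carrier := N\<rparr>)" by (rule subgroup_incl[OF Vsg N(1) VN])
      have "openin T (U0 <#> Wg)"
        by (rule setmult_open[OF _ Wg(3)]) (use Uc in \<open>auto simp: U0_def\<close>)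
      then have Vo: "openin (subtopology T N) V" unfolding V_def
        using openin_subtopology_Int[of T "U0 <#> Wg" N] by (simp add: Int_commute)
      obtain L where L: "permutable_complement (G\<lparr>carrier := N\<rparr>) V L" and Li: "\<forall>g \<in> carrier G. \<forall>x \<in> L. g \<otimes> x \<otimes> inv g \<in> L"
        using hyp Vsg' Vo by blast
      have Lsg': "subgroup L (G\<lparr>carrier := N\<rparr>)" and VL: "V <#> L = N" and VL1: "V \<inter> L = {\<one>}"
        using L unfolding permutable_complement_def by (auto simp: setmult_upd)
      have Lsg: "subgroup L G" by (rule incl_subgroup[OF N(1) Lsg'])
      have LN: "L \<subseteq> N" using subgroup.subset[OF Lsg'] by simp
      have Lc: "\<And>u. u \<in> L \<Longrightarrow> u \<in> carrier G" using subgroup.mem_carrier[OF Lsg] .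
      have Linv: "invar L" using Li unfolding invar_def .
      define WL where "WL = Wg <#> L"
      have WLsg: "subgroup WL G" unfolding WL_def by (rule subgroup_setmult[OF Wg(1) Lsg Linv])
      have WgWL: "Wg \<subseteq> WL"
      proof
        fix w assume "w \<in> Wg"
        then have "w = w \<otimes> \<one>" using Wc by simp
        then show "w \<in> WL" unfolding WL_def setmult_iff using \<open>w \<in> Wg\<close> subgroup.one_closed[OF Lsg] by blast
      qed
      have WLo: "openin T WL" by (rule open_subgroup_super[OF WLsg Wg(1) Wg(3) WgWL])
      have WLc: "closedin T WL" by (rule open_subgroup_closed[OF WLsg WLo])
      have WLi: "invar WL" unfolding invar_def
      proof (intro ballI)
        fix g x assume g: "g \<in> carrier G" and x: "x \<in> WL"
        then obtain w l where wl: "w \<in> Wg" "l \<in> L" "x = w \<otimes> l" unfolding WL_def setmult_iff by blast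
        have wc: "w \<in> carrier G" and lc: "l \<in> carrier G" using wl Wc Lc by auto
        have "g \<otimes> x \<otimes> inv g = (g \<otimes> w \<otimes> inv g) \<otimes> (g \<otimes> l \<otimes> inv g)"
          using g wc lc wl(3) by (simp add: m_assoc)
        moreover have "g \<otimes> w \<otimes> inv g \<in> Wg" using invarD[OF Wgi g wl(1)] .
        moreover have "g \<otimes> l \<otimes> inv g \<in> L" using invarD[OF Linv g wl(2)] .
        ultimately show "g \<otimes> x \<otimes> inv g \<in> WL" unfolding WL_def setmult_iff by blast
      qed
      define M' where "M' = M \<inter> WL"
      have M'F: "M' \<in> F"
      proof -
        have "closedin T M'" unfolding M'_def using Mcl WLc by (rule closedin_Int)
        moreover have "subgroup M' G" unfolding M'_def by (rule subgroups_Inter_pair[OF Msg WLsg])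
        moreover have "M' \<subseteq> N" unfolding M'_def using MN by blast
        moreover have "invar M'" unfolding M'_def using Mi WLi unfolding invar_def by blast
        moreover have "U <#> M' = N"
        proof
          have "U <#> M' \<subseteq> U <#> M" unfolding M'_def by (intro mono_set_mult) auto
          then show "U <#> M' \<subseteq> N" using UM by simp
          show "N \<subseteq> U <#> M'"
          proof
            fix n assume n: "n \<in> N"
            then have "n \<in> U <#> M" using UM by simp
            then obtain u m where um: "u \<in> U" "m \<in> M" "n = u \<otimes> m" unfolding setmult_iff by blast
            have "m \<in> V <#> L" using VL um(2) MN by blast
            then obtain v l where vl: "v \<in> V" "l \<in> L" "m = v \<otimes> l" unfolding setmult_iff by blast
            have "v \<in> U0 <#> Wg" using vl(1) unfolding V_def by blast
            then obtain u0 w where uw: "u0 \<in> U0" "w \<in> Wg" "v = u0 \<otimes> w" unfolding setmult_iff by blast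
            have c: "u \<in> carrier G" "m \<in> carrier G" "l \<in> carrier G" "u0 \<in> carrier G" "w \<in> carrier G"
              using um vl uw Uc Mc Lc Wc unfolding U0_def by auto
            define x where "x = w \<otimes> l"
            have xWL: "x \<in> WL" unfolding x_def WL_def setmult_iff using uw(2) vl(2) by blast
            have xm: "x = inv u0 \<otimes> m" unfolding x_def using vl(3) uw(3) c by (simp add: m_assoc)
            have "inv u0 \<in> M" using uw(1) subgroup.m_inv_closed[OF Msg] unfolding U0_def by blast
            then have "x \<in> M" unfolding xm using subgroup.m_closed[OF Msg _ um(2)] by blast
            then have xM': "x \<in> M'" using xWL unfolding M'_def by blast
            have "u \<otimes> u0 \<in> U" using subgroup.m_closed[OF U(1) um(1)] uw(1) unfolding U0_def by blast
            moreover have "n = (u \<otimes> u0) \<otimes> x" unfolding xm using um(3) c by (simp add: m_assoc)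
            ultimately show "n \<in> U <#> M'" using xM' unfolding setmult_iff by blast
          qed
        qed
        ultimately show ?thesis unfolding F_def by blast
      qed
      have "M' = M" using Mmin M'F unfolding M'_def by blast
      then have "a \<in> WL" using aUM unfolding M'_def by blast
      then obtain w l where wl: "w \<in> Wg" "l \<in> L" "a = w \<otimes> l" unfolding WL_def setmult_iff by blast
      have wc: "w \<in> carrier G" and lc: "l \<in> carrier G" using wl Wc Lc by auto
      have "inv a \<otimes> inv w \<otimes> inv (inv a) \<in> Wg"
        using invarD[OF Wgi inv_closed[OF ac] subgroup.m_inv_closed[OF Wg(1) wl(1)]] .
      then have iw: "inv a \<otimes> inv w \<otimes> a \<in> Wg" using ac by simp
      have "l = a \<otimes> (inv a \<otimes> inv w \<otimes> a)" using wl(3) wc lc ac by (simp add: m_assoc)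
      moreover have "a \<in> U0" using aUM unfolding U0_def .
      ultimately have "l \<in> U0 <#> Wg" using iw unfolding setmult_iff by blast
      then have "l \<in> V" unfolding V_def using LN wl(2) by blast
      then have "l = \<one>" using VL1 wl(2) by blast
      then have "a = w" using wl(3) wc by simp
      then show False using wl(1) Wg(4) by simp
    qed
  qed
  moreover have "\<one> \<in> U \<inter> M" using subgroup.one_closed[OF U(1)] subgroup.one_closed[OF Msg] by blast
  ultimately have "U \<inter> M = {\<one>}" by blast
  then show ?thesis using Mcl Msg MN Mi UM by blast
qed

end

lemma (in group) swap_mem:
  assumes A: "subgroup A G" and B: "subgroup B G" and y: "y \<in> carrier G" and iy: "inv y \<in> A <#> B"
  shows "\<exists>b\<in>B. \<exists>a\<in>A. y = b \<otimes> a"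
proof -
  obtain a b where ab: "a \<in> A" "b \<in> B" "inv y = a \<otimes> b" using iy unfolding setmult_iff by blast
  have ac: "a \<in> carrier G" and bc: "b \<in> carrier G"
    using subgroup.mem_carrier[OF A ab(1)] subgroup.mem_carrier[OF B ab(2)] by auto
  have "y = inv (inv y)" using y by simp
  also have "\<dots> = inv b \<otimes> inv a" using ab(3) ac bc by (simp add: inv_mult_group)
  finally show ?thesis using subgroup.m_inv_closed[OF A ab(1)] subgroup.m_inv_closed[OF B ab(2)] by blast
qed

lemma (in ctgrp) main_result:
  assumes td: "\<forall>x\<in>topspace T. connected_component_of_set T x = {x}"
    and Hsg: "subgroup H G" and Hcl: "closedin T H"
    and Nsg: "subgroup N G" and Ncl: "closedin T N" and Ni: "invar N"
    and HN: "H <#> N = carrier G"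
    and HC: "profinite_C (G\<lparr>carrier := H\<rparr>) (subtopology T H)"
    and hypN: "\<forall>U. subgroup U (G\<lparr>carrier := N\<rparr>) \<and> openin (subtopology T N) U \<longrightarrow>
           (\<exists>L. permutable_complement (G\<lparr>carrier := N\<rparr>) U L \<and>
                (\<forall>g \<in> carrier G. \<forall>x \<in> L. g \<otimes> x \<otimes> inv g \<in> L))"
    and X: "subgroup X G" "closedin T X"
  shows "\<exists>K. closedin T K \<and> permutable_complement G X K"
proof -
  have Hc: "\<And>u. u \<in> H \<Longrightarrow> u \<in> carrier G" using subgroup.mem_carrier[OF Hsg] .
  have Nc: "\<And>u. u \<in> N \<Longrightarrow> u \<in> carrier G" using subgroup.mem_carrier[OF Nsg] .
  have Xc: "\<And>u. u \<in> X \<Longrightarrow> u \<in> carrier G" using subgroup.mem_carrier[OF X(1)] .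
  define U where "U = X \<inter> N"
  have Usg: "subgroup U G" unfolding U_def by (rule subgroups_Inter_pair[OF X(1) Nsg])
  have UN: "U \<subseteq> N" unfolding U_def by blast
  have Ucl: "closedin T U" unfolding U_def using X(2) Ncl by (rule closedin_Int)
  obtain M where M: "closedin T M" "subgroup M G" "M \<subseteq> N" "invar M" "U <#> M = N" "U \<inter> M = {\<one>}"
    using invariant_complement[OF td Nsg Ncl Ni hypN Usg UN Ucl] by blast
  have Mc: "\<And>u. u \<in> M \<Longrightarrow> u \<in> carrier G" using subgroup.mem_carrier[OF M(2)] .
  define XN where "XN = X <#> N"
  have XNsg: "subgroup XN G" unfolding XN_def by (rule subgroup_setmult[OF X(1) Nsg Ni])
  have XNcl: "closedin T XN" unfolding XN_def by (rule closed_setmult[OF X(2) Ncl])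
  define Y where "Y = H \<inter> XN"
  have Ysg: "subgroup Y G" unfolding Y_def by (rule subgroups_Inter_pair[OF Hsg XNsg])
  have Ysg': "subgroup Y (G\<lparr>carrier := H\<rparr>)" by (rule subgroup_incl[OF Ysg Hsg]) (auto simp: Y_def)
  have Ycl: "closedin (subtopology T H) Y" unfolding Y_def closedin_subtopology
    using XNcl by blast
  obtain Z where Z: "closedin (subtopology T H) Z" "permutable_complement (G\<lparr>carrier := H\<rparr>) Y Z"
    using HC Ysg' Ycl unfolding profinite_C_def by blast
  have Zsg': "subgroup Z (G\<lparr>carrier := H\<rparr>)" and YZ: "Y <#> Z = H" and YZ1: "Y \<inter> Z = {\<one>}"
    using Z(2) unfolding permutable_complement_def by (auto simp: setmult_upd)
  have Zsg: "subgroup Z G" by (rule incl_subgroup[OF Hsg Zsg'])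
  have ZH: "Z \<subseteq> H" using subgroup.subset[OF Zsg'] by simp
  have Zcl: "closedin T Z" by (rule closedin_trans_full[OF Z(1) Hcl])
  have Zc: "\<And>u. u \<in> Z \<Longrightarrow> u \<in> carrier G" using subgroup.mem_carrier[OF Zsg] .
  define K where "K = Z <#> M"
  have Ksg: "subgroup K G" unfolding K_def by (rule subgroup_setmult[OF Zsg M(2) M(4)])
  have Kcl: "closedin T K" unfolding K_def by (rule closed_setmult[OF Zcl M(1)])
  have XK1: "X \<inter> K = {\<one>}"
  proof
    show "{\<one>} \<subseteq> X \<inter> K" using subgroup.one_closed[OF X(1)] subgroup.one_closed[OF Ksg] by blast
    show "X \<inter> K \<subseteq> {\<one>}"
    proof
      fix x assume x: "x \<in> X \<inter> K"
      then have "x \<in> Z <#> M" unfolding K_def by blast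
      then obtain z m where zm: "z \<in> Z" "m \<in> M" "x = z \<otimes> m" unfolding setmult_iff by blast
      have c: "z \<in> carrier G" "m \<in> carrier G" using zm Zc Mc by auto
      have "inv m \<in> N" using subgroup.m_inv_closed[OF Nsg] zm(2) M(3) by blast
      moreover have "z = x \<otimes> inv m" using zm(3) c by (simp add: m_assoc)
      ultimately have "z \<in> XN" using x unfolding XN_def setmult_iff by blast
      then have "z \<in> Y" using zm(1) ZH unfolding Y_def by blast
      then have "z = \<one>" using YZ1 zm(1) by blast
      then have "x = m" using zm(3) c by simp
      then have "x \<in> U \<inter> M" using x zm(2) M(3) unfolding U_def by blast
      then show "x \<in> {\<one>}" using M(6) by blast
    qed
  qed
  have KX: "g \<in> K <#> X" if g: "g \<in> carrier G" for g
  proof -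
    have "inv g \<in> H <#> N" using g HN by simp
    then obtain n' h' where nh: "n' \<in> N" "h' \<in> H" "g = n' \<otimes> h'" using swap_mem[OF Hsg Nsg g] by blast
    have "inv h' \<in> Y <#> Z" using YZ subgroup.m_inv_closed[OF Hsg nh(2)] by simp
    then obtain z' y' where zy: "z' \<in> Z" "y' \<in> Y" "h' = z' \<otimes> y'" using swap_mem[OF Ysg Zsg Hc[OF nh(2)]] by blast
    have y'c: "y' \<in> carrier G" using subgroup.mem_carrier[OF Ysg zy(2)] .
    have "inv y' \<in> X <#> N" using subgroup.m_inv_closed[OF XNsg] zy(2) unfolding Y_def XN_def by blast
    then obtain n2 x' where nx: "n2 \<in> N" "x' \<in> X" "y' = n2 \<otimes> x'" using swap_mem[OF X(1) Nsg y'c] by blast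
    have c: "n' \<in> carrier G" "z' \<in> carrier G" "n2 \<in> carrier G" "x' \<in> carrier G"
      using nh zy nx Nc Zc Xc by auto
    define n3 where "n3 = (inv z' \<otimes> n' \<otimes> z') \<otimes> n2"
    have "inv z' \<otimes> n' \<otimes> inv (inv z') \<in> N" using invarD[OF Ni inv_closed[OF c(2)] nh(1)] .
    then have "inv z' \<otimes> n' \<otimes> z' \<in> N" using c by simp
    then have n3N: "n3 \<in> N" unfolding n3_def using subgroup.m_closed[OF Nsg _ nx(1)] by blast
    have n3c: "n3 \<in> carrier G" using Nc[OF n3N] .
    have "inv n3 \<in> U <#> M" using subgroup.m_inv_closed[OF Nsg n3N] M(5) by simp
    then obtain m u where mu: "m \<in> M" "u \<in> U" "n3 = m \<otimes> u" using swap_mem[OF Usg M(2) n3c] by blast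
    have c2: "m \<in> carrier G" "u \<in> carrier G" using mu Mc subgroup.mem_carrier[OF Usg] by auto
    have "g = z' \<otimes> n3 \<otimes> x'" unfolding n3_def using nh(3) zy(3) nx(3) c by (simp add: m_assoc)
    also have "\<dots> = (z' \<otimes> m) \<otimes> (u \<otimes> x')" using mu(3) c c2 by (simp add: m_assoc)
    finally have geq: "g = (z' \<otimes> m) \<otimes> (u \<otimes> x')" .
    have "z' \<otimes> m \<in> K" unfolding K_def setmult_iff using zy(1) mu(1) by blast
    moreover have "u \<otimes> x' \<in> X" using subgroup.m_closed[OF X(1) _ nx(2)] mu(2) unfolding U_def by blast
    ultimately show ?thesis unfolding setmult_iff using geq by blast
  qed
  have XKG: "X <#> K = carrier G"
  proof
    show "X <#> K \<subseteq> carrier G" using Xc subgroup.mem_carrier[OF Ksg] by (auto simp: set_mult_def)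
    show "carrier G \<subseteq> X <#> K"
    proof
      fix g assume g: "g \<in> carrier G"
      have "inv g \<in> K <#> X" using KX[OF inv_closed[OF g]] .
      then obtain x k where "x \<in> X" "k \<in> K" "g = x \<otimes> k" using swap_mem[OF Ksg X(1) g] by blast
      then show "g \<in> X <#> K" unfolding setmult_iff by blast
    qed
  qed
  show ?thesis unfolding permutable_complement_def using Kcl Ksg XKG XK1 by blast
qed

theorem lemma2p11:
  fixes G :: "('a, 'b) monoid_scheme" and T :: "'a topology" and H N :: "'a set"
  assumes "profinite_group G T"
    and "subgroup H G" and "closedin T H"
    and "subgroup N G" and "closedin T N" and "normal N G"
    and "H <#>\<^bsub>G\<^esub> N = carrier G" and "H \<inter> N = {\<one>\<^bsub>G\<^esub>}"
    and "profinite_C (G\<lparr>carrier := H\<rparr>) (subtopology T H)"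
    and "\<forall>U. subgroup U (G\<lparr>carrier := N\<rparr>) \<and> openin (subtopology T N) U \<longrightarrow>
           (\<exists>L. permutable_complement (G\<lparr>carrier := N\<rparr>) U L \<and>
                (\<forall>g \<in> carrier G. \<forall>x \<in> L. g \<otimes>\<^bsub>G\<^esub> x \<otimes>\<^bsub>G\<^esub> inv\<^bsub>G\<^esub> g \<in> L))"
  shows "profinite_C G T"
proof -
  note pg = assms(1)
  have grp: "group G" and topsp: "topspace T = carrier G"
    and mc: "continuous_map (prod_topology T T) T (\<lambda>(x, y). x \<otimes>\<^bsub>G\<^esub> y)"
    and ic: "continuous_map T T (\<lambda>x. inv\<^bsub>G\<^esub> x)"
    and cpt: "compact_space T" and hd: "Hausdorff_space T"
    and td: "\<forall>x\<in>topspace T. connected_component_of_set T x = {x}"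
    using pg unfolding profinite_group_def topological_group_def by auto
  interpret ctgrp G T
    by (intro ctgrp.intro tgrp.intro ctgrp_axioms.intro tgrp_axioms.intro grp topsp mc ic cpt hd)
  have Ni: "invar N" using assms(6) normal_inv_iff unfolding invar_def by blast
  have "\<exists>K. closedin T K \<and> permutable_complement G X K" if X: "subgroup X G" "closedin T X" for X
    by (rule main_result[OF td assms(2-5) Ni assms(7) assms(9) assms(10) X])
  then show ?thesis unfolding profinite_C_def using pg by blast
qed

end
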